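(* Suppose the predictions are stable: $\sqrt{K\,\mathrm{Var}(f^{(1)}(X)-\bar f(X)\mid f^{(1)})}\xrightarrow{L^1}0$ as $n\to\infty$. For $j\in[K]$ define $$\tilde F_j=\frac{1}{\sqrt N}\sum_{i=1}^N\Big(f^{(j)}(\tilde X_i)-\mathbb{E}_X[f^{(j)}(X)]-\big(\bar f(\tilde X_i)-\mathbb{E}[\bar f(X)]\big)\Big).$$ Then $\frac1K\sum_{j=1}^K\tilde F_j\xrightarrow{p}0$.
   Context: Setting: $(X_i,Y_i)_{i\le n}$ i.i.d. from $\mathbb{P}$; $\tilde X_1,\dots,\tilde X_N$ i.i.d. from the feature marginal $\mathbb{P}_X$, independent of the labeled data; $X\sim\mathbb{P}_X$ is an independent generic draw. Folds $I_1,\dots,I_K$ are consecutive blocks of size $n/K$ of $\{1,\dots,n\}$; $f^{(j)}$ is the output of a possibly randomized training algorithm applied to $\{(X_i,Y_i)\}_{i\notin I_j}$; $\bar f(x)=\mathbb{E}[f^{(1)}(x)]$. $\mathbb{E}_X$ and $\mathrm{Var}_X$ denote expectation and variance over the independent draw $X$ conditionally on everything else (so $\mathbb{E}_X[f^{(j)}(X)]$ is random through $f^{(j)}$). Second moments are finite. *)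

theory Defs
  imports "HOL-Probability.Probability"
begin

text \<open>Folds are 0-indexed: fold j (j < K) is the block
  {j*(n div K) ..< (j+1)*(n div K)} of the indices {0..<n}; the paper's fold j+1.
  The sample space is the canonical product of the labeled data Z_0..Z_(n-1) (iid P),
  the unlabeled features X~_0..X~_(N-1) (iid P_X) and the algorithm randomness
  xi_0..xi_(K-1) (iid R), all mutually independent.\<close>

definition feat_dist :: "('x \<times> 'y) measure \<Rightarrow> 'x measure \<Rightarrow> 'x measure" where
  "feat_dist P SX = distr P SX fst"

definition sample_space ::
  "('x \<times> 'y) measure \<Rightarrow> 'x measure \<Rightarrow> 'r measure \<Rightarrow> nat \<Rightarrow> nat \<Rightarrow> nat
   \<Rightarrow> ((nat \<Rightarrow> 'x \<times> 'y) \<times> (nat \<Rightarrow> 'x) \<times> (nat \<Rightarrow> 'r)) measure" where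
  "sample_space P SX R n N K =
     PiM {0..<n} (\<lambda>_. P) \<Otimes>\<^sub>M (PiM {0..<N} (\<lambda>_. feat_dist P SX) \<Otimes>\<^sub>M PiM {0..<K} (\<lambda>_. R))"

definition fold_idx :: "nat \<Rightarrow> nat \<Rightarrow> nat \<Rightarrow> nat \<Rightarrow> nat" where
  "fold_idx n K j k = (if k < j * (n div K) then k else k + n div K)"

definition train_data :: "nat \<Rightarrow> nat \<Rightarrow> nat \<Rightarrow> (nat \<Rightarrow> 'z) \<Rightarrow> (nat \<Rightarrow> 'z)" where
  "train_data n K j z = restrict (\<lambda>k. z (fold_idx n K j k)) {0..<n - n div K}"

text \<open>f^(j): the algorithm A (training set, randomness, point) applied to the data outside fold j.\<close>
definition cv_pred ::
  "((nat \<Rightarrow> 'x \<times> 'y) \<Rightarrow> 'r \<Rightarrow> 'x \<Rightarrow> real) \<Rightarrow> nat \<Rightarrow> nat \<Rightarrow> nat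
   \<Rightarrow> (nat \<Rightarrow> 'x \<times> 'y) \<times> (nat \<Rightarrow> 'x) \<times> (nat \<Rightarrow> 'r) \<Rightarrow> 'x \<Rightarrow> real" where
  "cv_pred A n K j \<omega> x = A (train_data n K j (fst \<omega>)) (snd (snd \<omega>) j) x"

text \<open>\<bar>f(x) = E[f^(1)(x)] (fold 0 here).\<close>
definition fbar ::
  "((nat \<Rightarrow> 'x \<times> 'y) \<times> (nat \<Rightarrow> 'x) \<times> (nat \<Rightarrow> 'r)) measure
   \<Rightarrow> ((nat \<Rightarrow> 'x \<times> 'y) \<Rightarrow> 'r \<Rightarrow> 'x \<Rightarrow> real) \<Rightarrow> nat \<Rightarrow> nat \<Rightarrow> 'x \<Rightarrow> real" where
  "fbar \<Omega> A n K x = (\<integral>\<omega>. cv_pred A n K 0 \<omega> x \<partial>\<Omega>)"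

definition var_X :: "'x measure \<Rightarrow> ('x \<Rightarrow> real) \<Rightarrow> real" where
  "var_X PX g = (\<integral>x. (g x - (\<integral>x'. g x' \<partial>PX))\<^sup>2 \<partial>PX)"

definition Ftilde ::
  "('x \<times> 'y) measure \<Rightarrow> 'x measure \<Rightarrow> 'r measure \<Rightarrow> ((nat \<Rightarrow> 'x \<times> 'y) \<Rightarrow> 'r \<Rightarrow> 'x \<Rightarrow> real)
   \<Rightarrow> nat \<Rightarrow> nat \<Rightarrow> nat \<Rightarrow> nat \<Rightarrow> (nat \<Rightarrow> 'x \<times> 'y) \<times> (nat \<Rightarrow> 'x) \<times> (nat \<Rightarrow> 'r) \<Rightarrow> real" where
  "Ftilde P SX R A n N K j \<omega> =
     (let PX = feat_dist P SX; fb = fbar (sample_space P SX R n N K) A n K;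
          f = cv_pred A n K j \<omega>; Xt = fst (snd \<omega>) in
      (1 / sqrt (real N)) *
        (\<Sum>i<N. f (Xt i) - (\<integral>x. f x \<partial>PX) - (fb (Xt i) - (\<integral>x. fb x \<partial>PX))))"

definition L1_to_zero :: "(nat \<Rightarrow> 'a measure) \<Rightarrow> (nat \<Rightarrow> 'a \<Rightarrow> real) \<Rightarrow> bool" where
  "L1_to_zero M Z \<longleftrightarrow> (\<forall>n. integrable (M n) (Z n)) \<and>
     (\<lambda>n. \<integral>\<omega>. \<bar>Z n \<omega>\<bar> \<partial>M n) \<longlonglongrightarrow> 0"

definition prob_to_zero :: "(nat \<Rightarrow> 'a measure) \<Rightarrow> (nat \<Rightarrow> 'a \<Rightarrow> real) \<Rightarrow> bool" where
  "prob_to_zero M Z \<longleftrightarrow> (\<forall>n. Z n \<in> borel_measurable (M n)) \<and>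
     (\<forall>e>0. (\<lambda>n. measure (M n) {\<omega> \<in> space (M n). e \<le> \<bar>Z n \<omega>\<bar>}) \<longlonglongrightarrow> 0)"

end

theory Submission
  imports Defs
begin

lemma iid_sq:
  fixes c :: "'a \<Rightarrow> real" and Q :: "'a measure"
  assumes Q: "prob_space Q" and cm[measurable]: "c \<in> borel_measurable Q"
    and c2: "integrable Q (\<lambda>x. (c x)\<^sup>2)" and c0: "integral\<^sup>L Q c = 0"
  shows "integrable (PiM {0..<N} (\<lambda>_. Q)) (\<lambda>x. (\<Sum>i<N. c (x i))\<^sup>2)
     \<and> (\<integral>x. (\<Sum>i<N. c (x i))\<^sup>2 \<partial>PiM {0..<N} (\<lambda>_. Q)) = real N * (\<integral>x. (c x)\<^sup>2 \<partial>Q)"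
proof -
  interpret Q: prob_space Q by (rule Q)
  interpret PS: product_sigma_finite "\<lambda>_. Q" by unfold_locales
  let ?X = "PiM {0..<N} (\<lambda>_. Q)"
  have ci: "integrable Q c" by (rule Q.square_integrable_imp_integrable[OF cm c2])
  have comp: "i < N \<Longrightarrow> distr ?X Q (\<lambda>x. x i) = Q" for i
    using distr_PiM_component[of "{0..<N}" "\<lambda>_. Q" i] Q by simp
  have term_int: "integrable ?X (\<lambda>x. c (x i) * c (x k))
      \<and> (\<integral>x. c (x i) * c (x k) \<partial>?X) = (if i = k then (\<integral>x. (c x)\<^sup>2 \<partial>Q) else 0)"
    if ik: "i < N" "k < N" for i k
  proof (cases "i = k")
    case True
    have "integrable (distr ?X Q (\<lambda>x. x i)) (\<lambda>x. (c x)\<^sup>2)" using comp[OF ik(1)] c2 by simp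
    then have "integrable ?X (\<lambda>x. (c (x i))\<^sup>2)"
      using ik by (subst (asm) integrable_distr_eq) auto
    moreover have "(\<integral>x. (c (x i))\<^sup>2 \<partial>?X) = (\<integral>x. (c x)\<^sup>2 \<partial>distr ?X Q (\<lambda>x. x i))"
      using ik by (subst integral_distr) auto
    ultimately show ?thesis using True comp[OF ik(1)] by (simp add: power2_eq_square)
  next
    case False
    define f where "f l = (if l = i \<or> l = k then c else (\<lambda>_. 1::real))" for l
    have fi: "l \<in> {0..<N} \<Longrightarrow> integrable Q (f l)" for l
      using ci by (auto simp: f_def)
    have eq: "(\<Prod>l\<in>{0..<N}. f l (x l)) = c (x i) * c (x k)" for x
    proof -
      have "(\<Prod>l\<in>{0..<N}. f l (x l)) = f i (x i) * (\<Prod>l\<in>{0..<N}-{i}. f l (x l))"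
        using ik by (subst prod.remove[of _ i]) auto
      also have "(\<Prod>l\<in>{0..<N}-{i}. f l (x l)) = f k (x k) * (\<Prod>l\<in>{0..<N}-{i}-{k}. f l (x l))"
        using ik False by (subst prod.remove[of _ k]) auto
      also have "(\<Prod>l\<in>{0..<N}-{i}-{k}. f l (x l)) = 1"
        by (rule prod.neutral) (auto simp: f_def)
      finally show ?thesis by (simp add: f_def)
    qed
    have "integrable ?X (\<lambda>x. \<Prod>l\<in>{0..<N}. f l (x l))"
      by (rule PS.product_integrable_prod) (auto intro: fi)
    moreover have "(\<integral>x. (\<Prod>l\<in>{0..<N}. f l (x l)) \<partial>?X) = (\<Prod>l\<in>{0..<N}. integral\<^sup>L Q (f l))"
      by (rule PS.product_integral_prod) (auto intro: fi)
    moreover have "(\<Prod>l\<in>{0..<N}. integral\<^sup>L Q (f l)) = 0"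
    proof (rule prod_zero)
      show "\<exists>l\<in>{0..<N}. integral\<^sup>L Q (f l) = 0"
        using ik c0 by (intro bexI[of _ i]) (auto simp: f_def)
    qed simp
    ultimately show ?thesis using False by (simp add: eq)
  qed
  have sq: "(\<Sum>i<N. c (x i))\<^sup>2 = (\<Sum>i<N. \<Sum>k<N. c (x i) * c (x k))" for x
    by (simp add: power2_eq_square sum_product)
  have ti: "\<And>i k. i < N \<Longrightarrow> k < N \<Longrightarrow> integrable ?X (\<lambda>x. c (x i) * c (x k))"
    using term_int by blast
  have "integrable ?X (\<lambda>x. \<Sum>i<N. \<Sum>k<N. c (x i) * c (x k))"
    by (intro Bochner_Integration.integrable_sum) (auto intro: ti)
  moreover have "(\<integral>x. (\<Sum>i<N. \<Sum>k<N. c (x i) * c (x k)) \<partial>?X) = (\<Sum>i<N. \<Sum>k<N. (\<integral>x. c (x i) * c (x k) \<partial>?X))"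
    apply (subst Bochner_Integration.integral_sum)
     apply (intro Bochner_Integration.integrable_sum) apply (auto intro: ti)[1]
    apply (intro sum.cong refl)
    apply (subst Bochner_Integration.integral_sum)
     apply (auto intro: ti)
    done
  moreover have "\<dots> = (\<Sum>i<N. \<integral>x. (c x)\<^sup>2 \<partial>Q)"
  proof (intro sum.cong refl)
    fix i assume i: "i \<in> {..<N}"
    have "(\<Sum>k<N. (\<integral>x. c (x i) * c (x k) \<partial>?X)) = (\<Sum>k<N. if i = k then (\<integral>x. (c x)\<^sup>2 \<partial>Q) else 0)"
      using term_int i by (intro sum.cong refl) auto
    also have "\<dots> = (\<integral>x. (c x)\<^sup>2 \<partial>Q)" using i by (simp add: sum.delta)
    finally show "(\<Sum>k<N. (\<integral>x. c (x i) * c (x k) \<partial>?X)) = (\<integral>x. (c x)\<^sup>2 \<partial>Q)" .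
  qed
  ultimately show ?thesis by (simp add: sq)
qed

lemma cheb:
  fixes c :: "'a \<Rightarrow> real" and Q :: "'a measure"
  assumes Q: "prob_space Q" and cm[measurable]: "c \<in> borel_measurable Q"
    and c2: "integrable Q (\<lambda>x. (c x)\<^sup>2)" and c0: "integral\<^sup>L Q c = 0"
    and e: "0 < e" and Np: "0 < N"
  shows "emeasure (PiM {0..<N} (\<lambda>_. Q)) {x \<in> space (PiM {0..<N} (\<lambda>_. Q)).
            e \<le> \<bar>(1 / sqrt (real N)) * (\<Sum>i<N. c (x i))\<bar>}
         \<le> ennreal (min 1 ((\<integral>x. (c x)\<^sup>2 \<partial>Q) / e\<^sup>2))"
proof -
  let ?X = "PiM {0..<N} (\<lambda>_. Q)"
  interpret X: prob_space ?X by (rule prob_space_PiM) (use Q in auto)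
  note ii = iid_sq[OF Q cm c2 c0, of N]
  let ?Y = "\<lambda>x. (1 / sqrt (real N)) * (\<Sum>i<N. c (x i))"
  have Ym[measurable]: "?Y \<in> borel_measurable ?X" by measurable
  have Y2: "(\<lambda>x. (?Y x)^2) = (\<lambda>x. (1 / real N) * (\<Sum>i<N. c (x i))\<^sup>2)"
    using Np by (simp add: power_mult_distrib power_divide)
  have Y2i: "integrable ?X (\<lambda>x. (?Y x)^2)" unfolding Y2 using ii by simp
  have Y2e: "(\<integral>x. (?Y x)^2 \<partial>?X) = (\<integral>x. (c x)\<^sup>2 \<partial>Q)" unfolding Y2 using ii Np by simp
  have "X.prob {x\<in>space ?X. e \<le> \<bar>?Y x\<bar>} \<le> (\<integral>x. (?Y x)^2 \<partial>?X) / e\<^sup>2"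
    by (rule X.second_moment_method[OF Ym Y2i e])
  then have "X.prob {x\<in>space ?X. e \<le> \<bar>?Y x\<bar>} \<le> min 1 ((\<integral>x. (c x)\<^sup>2 \<partial>Q) / e\<^sup>2)"
    using X.prob_le_1 Y2e by simp
  then show ?thesis by (simp add: X.emeasure_eq_measure)
qed

lemma sqrt_sum_le: "(\<And>j. j \<in> J \<Longrightarrow> 0 \<le> v j) \<Longrightarrow> sqrt (\<Sum>j\<in>J. v j) \<le> (\<Sum>j\<in>J. sqrt (v j))"
proof (induction J rule: infinite_finite_induct)
  case (insert x F)
  then have "sqrt (\<Sum>j\<in>insert x F. v j) = sqrt (v x + (\<Sum>j\<in>F. v j))" by simp
  also have "\<dots> \<le> sqrt (v x) + sqrt (\<Sum>j\<in>F. v j)"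
    using insert by (intro sqrt_add_le_add_sqrt) (auto intro: sum_nonneg)
  also have "\<dots> \<le> sqrt (v x) + (\<Sum>j\<in>F. sqrt (v j))" using insert by auto
  finally show ?case using insert by simp
qed auto

lemma sqrt_avg_le:
  assumes K: "0 < K" and v: "\<And>j. j < K \<Longrightarrow> 0 \<le> v j"
  shows "sqrt ((1 / real K) * (\<Sum>j<K. v j)) \<le> (1 / real K) * (\<Sum>j<K. sqrt (real K * v j))"
proof -
  have "sqrt ((1 / real K) * (\<Sum>j<K. v j)) = sqrt (\<Sum>j<K. v j) / sqrt (real K)"
    by (simp add: real_sqrt_divide)
  also have "\<dots> \<le> (\<Sum>j<K. sqrt (v j)) / sqrt (real K)"
    using v by (intro divide_right_mono sqrt_sum_le) auto
  also have "\<dots> = (1 / real K) * (\<Sum>j<K. sqrt (real K * v j))"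
  proof -
    have "(\<Sum>j<K. sqrt (real K * v j)) = sqrt (real K) * (\<Sum>j<K. sqrt (v j))"
      by (simp add: real_sqrt_mult sum_distrib_left)
    moreover have "sqrt (real K) * sqrt (real K) = real K" using K by simp
    ultimately show ?thesis using K
      by (simp add: field_simps)
  qed
  finally show ?thesis .
qed

lemma min_le_sqrt:
  assumes u: "0 \<le> u" and e: "0 < e" shows "min 1 (u / e\<^sup>2) \<le> sqrt u / e"
proof -
  define t where "t = sqrt u / e"
  have t0: "0 \<le> t" using u e by (simp add: t_def)
  have "u / e\<^sup>2 = t\<^sup>2" using u by (simp add: t_def power_divide)
  moreover have "min 1 (t\<^sup>2) \<le> t"
  proof (cases "t \<le> 1")
    case True
    then have "t * t \<le> t * 1" using t0 by (intro mult_left_mono) auto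
    then show ?thesis by (simp add: power2_eq_square)
  qed simp
  ultimately show ?thesis by (simp add: t_def)
qed

lemma sq_avg_le: "((1 / real K) * (\<Sum>j<K. d j))\<^sup>2 \<le> (1 / real K) * (\<Sum>j<K. (d j)\<^sup>2)"
proof (cases "K = 0")
  case False
  have "(\<Sum>j<K. d j)\<^sup>2 \<le> (\<Sum>j<K. (d j)\<^sup>2) * real K"
    using sum_squared_le_sum_of_squares[of d "{..<K}"] by simp
  then show ?thesis using False
    by (simp add: power_mult_distrib power_divide field_simps power2_eq_square)
qed simp

lemma sqint_diff:
  fixes f g :: "'a \<Rightarrow> real"
  assumes [measurable]: "f \<in> borel_measurable M" "g \<in> borel_measurable M"
    and fi: "integrable M (\<lambda>x. (f x)\<^sup>2)" and gi: "integrable M (\<lambda>x. (g x)\<^sup>2)"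
  shows "integrable M (\<lambda>x. (f x - g x)\<^sup>2)"
proof (rule Bochner_Integration.integrable_bound)
  show "integrable M (\<lambda>x. 2 * (f x)\<^sup>2 + 2 * (g x)\<^sup>2)" using fi gi by auto
  show "(\<lambda>x. (f x - g x)\<^sup>2) \<in> borel_measurable M" by measurable
  show "AE x in M. norm ((f x - g x)\<^sup>2) \<le> norm (2 * (f x)\<^sup>2 + 2 * (g x)\<^sup>2)"
  proof (intro AE_I2)
    fix x
    have "0 \<le> (f x + g x)\<^sup>2" by simp
    then have "(f x - g x)\<^sup>2 \<le> 2 * (f x)\<^sup>2 + 2 * (g x)\<^sup>2"
      by (simp add: power2_eq_square algebra_simps)
    then show "norm ((f x - g x)\<^sup>2) \<le> norm (2 * (f x)\<^sup>2 + 2 * (g x)\<^sup>2)"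
      by simp
  qed
qed

lemma int_of_nn:
  fixes g :: "'a \<Rightarrow> real"
  assumes "g \<in> borel_measurable M" "\<And>x. 0 \<le> g x" "(\<integral>\<^sup>+ x. ennreal (g x) \<partial>M) \<noteq> \<infinity>"
  shows "integrable M g"
  using assms by (intro integrableI_bounded) (auto simp: top.not_eq_extremum)

locale cvset =
  fixes P :: "('x \<times> 'y) measure" and SX :: "'x measure" and SY :: "'y measure"
    and R :: "'r measure"
    and A :: "(nat \<Rightarrow> 'x \<times> 'y) \<Rightarrow> 'r \<Rightarrow> 'x \<Rightarrow> real"
    and n N K :: nat
  assumes P: "prob_space P" and sets_P: "sets P = sets (SX \<Otimes>\<^sub>M SY)"
    and R: "prob_space R"
    and Kpos: "0 < K"
    and Npos: "0 < N"
    and A_meas: "(\<lambda>(dr, x). A (fst dr) (snd dr) x)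
        \<in> borel_measurable ((PiM {0..<n - n div K} (\<lambda>_. P) \<Otimes>\<^sub>M R) \<Otimes>\<^sub>M SX)"
    and second_moment: "integrable (sample_space P SX R n N K \<Otimes>\<^sub>M feat_dist P SX)
        (\<lambda>(\<omega>, x). (cv_pred A n K 0 \<omega> x)\<^sup>2)"
begin

abbreviation "Q \<equiv> feat_dist P SX"
abbreviation "\<Omega> \<equiv> sample_space P SX R n N K"
abbreviation "m \<equiv> n - n div K"
abbreviation "D \<equiv> PiM {0..<m} (\<lambda>_. P)"
abbreviation "PI \<equiv> PiM {0..<n} (\<lambda>_. P)"
abbreviation "XJ \<equiv> PiM {0..<N} (\<lambda>_. Q)"
abbreviation "RL \<equiv> PiM {0..<K} (\<lambda>_. R)"

lemma fst_meas: "fst \<in> measurable P SX"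
  using measurable_cong_sets[OF sets_P refl] measurable_fst by blast

lemma sets_Q[simp]: "sets Q = sets SX"
  by (simp add: feat_dist_def)

lemma space_Q[simp]: "space Q = space SX"
  by (simp add: feat_dist_def)

lemma probQ: "prob_space Q"
  unfolding feat_dist_def by (rule prob_space.prob_space_distr[OF P fst_meas])

lemma probPI: "prob_space PI" by (rule prob_space_PiM) (use P in auto)
lemma probD: "prob_space D" by (rule prob_space_PiM) (use P in auto)
lemma probXJ: "prob_space XJ" by (rule prob_space_PiM) (use probQ in auto)
lemma probRL: "prob_space RL" by (rule prob_space_PiM) (use R in auto)

lemma Omega_def: "\<Omega> = PI \<Otimes>\<^sub>M (XJ \<Otimes>\<^sub>M RL)"
  by (simp add: sample_space_def)

lemma probOm: "prob_space \<Omega>"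
  unfolding Omega_def by (intro prob_space_pair probPI probXJ probRL)

lemma fold_idx_in: "k < m \<Longrightarrow> fold_idx n K j k < n"
  unfolding fold_idx_def by auto

lemma fold_idx_inj: "inj_on (fold_idx n K j) {0..<m}"
  unfolding fold_idx_def inj_on_def by auto

lemma train_meas: "train_data n K j \<in> measurable PI D"
  unfolding train_data_def
  by (intro measurable_restrict measurable_component_singleton) (auto intro: fold_idx_in)

lemma train_distr: "distr PI D (train_data n K j) = D"
proof -
  have "distr PI (PiM {0..<m} (\<lambda>i. (\<lambda>_. P) (fold_idx n K j i))) (\<lambda>\<omega>. \<lambda>k\<in>{0..<m}. \<omega> (fold_idx n K j k))
     = PiM {0..<m} (\<lambda>i. (\<lambda>_. P) (fold_idx n K j i))"
    by (rule distr_PiM_reindex) (use P fold_idx_inj fold_idx_in in auto)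
  then show ?thesis unfolding train_data_def by (simp add: restrict_def)
qed

lemma cv_pred_eq: "cv_pred A n K j \<omega> x = A (train_data n K j (fst \<omega>)) (snd (snd \<omega>) j) x"
  by (simp add: cv_pred_def)

lemma map_meas: "j < K \<Longrightarrow> (\<lambda>\<omega>. (train_data n K j (fst \<omega>), snd (snd \<omega>) j)) \<in> measurable \<Omega> (D \<Otimes>\<^sub>M R)"
  unfolding Omega_def
  apply (intro measurable_Pair)
   apply (rule measurable_compose[OF measurable_fst train_meas])
  apply (rule measurable_compose[OF measurable_snd])
  apply (rule measurable_compose[OF measurable_snd])
  apply (rule measurable_component_singleton)
  apply simp
  done

lemma A_meas': "(\<lambda>(dr, x). A (fst dr) (snd dr) x) \<in> borel_measurable ((D \<Otimes>\<^sub>M R) \<Otimes>\<^sub>M Q)"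
  using A_meas by (subst measurable_cong_sets[OF sets_pair_measure_cong[OF refl sets_Q] refl])

lemma f_meas: "j < K \<Longrightarrow> (\<lambda>(\<omega>, x). cv_pred A n K j \<omega> x) \<in> borel_measurable (\<Omega> \<Otimes>\<^sub>M Q)"
proof -
  assume j: "j < K"
  have "(\<lambda>(\<omega>, x). ((train_data n K j (fst \<omega>), snd (snd \<omega>) j), x)) \<in> measurable (\<Omega> \<Otimes>\<^sub>M Q) ((D \<Otimes>\<^sub>M R) \<Otimes>\<^sub>M Q)"
    using map_meas[OF j] by (auto intro!: measurable_Pair measurable_compose[OF measurable_fst] simp: split_beta')
  from measurable_compose[OF this A_meas'] show ?thesis
    by (simp add: cv_pred_eq split_beta')
qed

lemma nn_Omega:
  assumes H: "H \<in> borel_measurable \<Omega>"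
  shows "integral\<^sup>N \<Omega> H = (\<integral>\<^sup>+ a. \<integral>\<^sup>+ r. \<integral>\<^sup>+ x. H (a, (x, r)) \<partial>XJ \<partial>RL \<partial>PI)"
proof -
  interpret XJ: prob_space XJ by (rule probXJ)
  interpret RL: prob_space RL by (rule probRL)
  interpret PI: prob_space PI by (rule probPI)
  interpret XR: pair_prob_space XJ RL ..
  have sfXR: "sigma_finite_measure (XJ \<Otimes>\<^sub>M RL)"
    by (intro subprob_space_imp_sigma_finite prob_space_imp_subprob_space prob_space_pair probXJ probRL)
  interpret O: pair_prob_space PI "XJ \<Otimes>\<^sub>M RL" ..
  have "integral\<^sup>N \<Omega> H = (\<integral>\<^sup>+ a. \<integral>\<^sup>+ y. H (a, y) \<partial>(XJ \<Otimes>\<^sub>M RL) \<partial>PI)"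
    unfolding Omega_def using H unfolding Omega_def by (rule sigma_finite_measure.nn_integral_fst[OF sfXR, symmetric])
  also have "\<dots> = (\<integral>\<^sup>+ a. \<integral>\<^sup>+ r. \<integral>\<^sup>+ x. H (a, (x, r)) \<partial>XJ \<partial>RL \<partial>PI)"
  proof (rule nn_integral_cong)
    fix a assume a: "a \<in> space PI"
    have "(\<lambda>y. H (a, y)) \<in> borel_measurable (XJ \<Otimes>\<^sub>M RL)"
      using H a unfolding Omega_def by (rule measurable_compose_Pair1[rotated])
    then show "(\<integral>\<^sup>+ y. H (a, y) \<partial>(XJ \<Otimes>\<^sub>M RL)) = (\<integral>\<^sup>+ r. \<integral>\<^sup>+ x. H (a, (x, r)) \<partial>XJ \<partial>RL)"
      by (subst XR.nn_integral_snd[symmetric]) auto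
  qed
  finally show ?thesis .
qed

lemma transfer:
  assumes j: "j < K" and Phi: "Phi \<in> borel_measurable (D \<Otimes>\<^sub>M R)"
  shows "(\<integral>\<^sup>+ \<omega>. Phi (train_data n K j (fst \<omega>), snd (snd \<omega>) j) \<partial>\<Omega>) = integral\<^sup>N (D \<Otimes>\<^sub>M R) Phi"
proof -
  interpret XJ: prob_space XJ by (rule probXJ)
  interpret RL: prob_space RL by (rule probRL)
  interpret PI: prob_space PI by (rule probPI)
  interpret Rp: prob_space R by (rule R)
  interpret Dp: prob_space D by (rule probD)
  interpret DR: pair_prob_space D R ..
  have m1: "(\<lambda>\<omega>. Phi (train_data n K j (fst \<omega>), snd (snd \<omega>) j)) \<in> borel_measurable \<Omega>"
    using measurable_compose[OF map_meas[OF j] Phi] .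
  have "(\<integral>\<^sup>+ \<omega>. Phi (train_data n K j (fst \<omega>), snd (snd \<omega>) j) \<partial>\<Omega>)
     = (\<integral>\<^sup>+ a. \<integral>\<^sup>+ r. \<integral>\<^sup>+ x. Phi (train_data n K j a, r j) \<partial>XJ \<partial>RL \<partial>PI)"
    using nn_Omega[OF m1] by simp
  also have "\<dots> = (\<integral>\<^sup>+ a. \<integral>\<^sup>+ r. Phi (train_data n K j a, r j) \<partial>RL \<partial>PI)"
    by (simp add: XJ.emeasure_space_1)
  also have "\<dots> = (\<integral>\<^sup>+ a. \<integral>\<^sup>+ r. Phi (train_data n K j a, r) \<partial>R \<partial>PI)"
  proof (rule nn_integral_cong)
    fix a assume a: "a \<in> space PI"
    have ta: "train_data n K j a \<in> space D" using train_meas a by (auto simp: measurable_def)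
    have mm: "(\<lambda>r. Phi (train_data n K j a, r)) \<in> borel_measurable R"
      using Phi ta by (rule measurable_compose_Pair1[rotated])
    have "(\<integral>\<^sup>+ r. Phi (train_data n K j a, r) \<partial>R) = (\<integral>\<^sup>+ r. Phi (train_data n K j a, r) \<partial>distr RL R (\<lambda>r. r j))"
      using distr_PiM_component[of "{0..<K}" "\<lambda>_. R" j] R j by simp
    also have "\<dots> = (\<integral>\<^sup>+ r. Phi (train_data n K j a, r j) \<partial>RL)"
      using mm j by (subst nn_integral_distr) auto
    finally show "(\<integral>\<^sup>+ r. Phi (train_data n K j a, r j) \<partial>RL) = (\<integral>\<^sup>+ r. Phi (train_data n K j a, r) \<partial>R)" ..
  qed
  also have "\<dots> = (\<integral>\<^sup>+ d. \<integral>\<^sup>+ r. Phi (d, r) \<partial>R \<partial>distr PI D (train_data n K j))"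
    using Phi by (subst nn_integral_distr) (auto intro: train_meas)
  also have "\<dots> = integral\<^sup>N (D \<Otimes>\<^sub>M R) Phi"
    unfolding train_distr using Phi by (rule sigma_finite_measure.nn_integral_fst[OF subprob_space_imp_sigma_finite[OF prob_space_imp_subprob_space[OF R]]])
  finally show ?thesis .
qed

abbreviation "fb \<equiv> fbar \<Omega> A n K"

lemma sfOm: "sigma_finite_measure \<Omega>"
  by (intro subprob_space_imp_sigma_finite prob_space_imp_subprob_space probOm)
lemma sfQ: "sigma_finite_measure Q"
  by (intro subprob_space_imp_sigma_finite prob_space_imp_subprob_space probQ)

lemma fb_meas: "fb \<in> borel_measurable Q"
proof -
  have "(\<lambda>(x, \<omega>). cv_pred A n K 0 \<omega> x) \<in> borel_measurable (Q \<Otimes>\<^sub>M \<Omega>)"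
    using measurable_pair_swap[OF f_meas[of 0]] Kpos by (simp add: split_beta')
  then show ?thesis unfolding fbar_def
    by (rule sigma_finite_measure.borel_measurable_lebesgue_integral[OF sfOm, of "\<lambda>x \<omega>. cv_pred A n K 0 \<omega> x", simplified])
qed

lemma second_nn: "(\<integral>\<^sup>+ x. \<integral>\<^sup>+ \<omega>. ennreal ((cv_pred A n K 0 \<omega> x)\<^sup>2) \<partial>\<Omega> \<partial>Q) \<noteq> \<infinity>"
proof -
  interpret O: prob_space \<Omega> by (rule probOm)
  interpret Qp: prob_space Q by (rule probQ)
  interpret OQ: pair_prob_space \<Omega> Q ..
  have m: "(\<lambda>z. ennreal ((\<lambda>(\<omega>, x). (cv_pred A n K 0 \<omega> x)\<^sup>2) z)) \<in> borel_measurable (\<Omega> \<Otimes>\<^sub>M Q)"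
  proof -
    have h0: "(\<lambda>z. cv_pred A n K 0 (fst z) (snd z)) \<in> borel_measurable (\<Omega> \<Otimes>\<^sub>M Q)"
      using f_meas[of 0] Kpos by (simp add: split_beta')
    have h2: "(\<lambda>z. (cv_pred A n K 0 (fst z) (snd z))\<^sup>2) \<in> borel_measurable (\<Omega> \<Otimes>\<^sub>M Q)"
      using borel_measurable_power[OF h0, of 2] .
    show ?thesis using measurable_compose[OF h2 measurable_ennreal] by (simp add: split_beta' comp_def)
  qed
  have "(\<integral>\<^sup>+ x. \<integral>\<^sup>+ \<omega>. ennreal ((cv_pred A n K 0 \<omega> x)\<^sup>2) \<partial>\<Omega> \<partial>Q)
     = (\<integral>\<^sup>+ z. ennreal ((\<lambda>(\<omega>, x). (cv_pred A n K 0 \<omega> x)\<^sup>2) z) \<partial>(\<Omega> \<Otimes>\<^sub>M Q))"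
    using OQ.nn_integral_snd[OF m] by simp
  also have "\<dots> \<noteq> \<infinity>" using integrableD(2)[OF second_moment] .
  finally show ?thesis .
qed

lemma second_nn': "(\<integral>\<^sup>+ \<omega>. \<integral>\<^sup>+ x. ennreal ((cv_pred A n K 0 \<omega> x)\<^sup>2) \<partial>Q \<partial>\<Omega>) \<noteq> \<infinity>"
proof -
  interpret O: prob_space \<Omega> by (rule probOm)
  interpret Qp: prob_space Q by (rule probQ)
  interpret OQ: pair_prob_space \<Omega> Q ..
  have m: "(\<lambda>z. ennreal ((\<lambda>(\<omega>, x). (cv_pred A n K 0 \<omega> x)\<^sup>2) z)) \<in> borel_measurable (\<Omega> \<Otimes>\<^sub>M Q)"
  proof -
    have h0: "(\<lambda>z. cv_pred A n K 0 (fst z) (snd z)) \<in> borel_measurable (\<Omega> \<Otimes>\<^sub>M Q)"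
      using f_meas[of 0] Kpos by (simp add: split_beta')
    have h2: "(\<lambda>z. (cv_pred A n K 0 (fst z) (snd z))\<^sup>2) \<in> borel_measurable (\<Omega> \<Otimes>\<^sub>M Q)"
      using borel_measurable_power[OF h0, of 2] .
    show ?thesis using measurable_compose[OF h2 measurable_ennreal] by (simp add: split_beta' comp_def)
  qed
  have "(\<integral>\<^sup>+ \<omega>. \<integral>\<^sup>+ x. ennreal ((cv_pred A n K 0 \<omega> x)\<^sup>2) \<partial>Q \<partial>\<Omega>)
     = (\<integral>\<^sup>+ z. ennreal ((\<lambda>(\<omega>, x). (cv_pred A n K 0 \<omega> x)\<^sup>2) z) \<partial>(\<Omega> \<Otimes>\<^sub>M Q))"
    using Qp.nn_integral_fst[OF m] by simp
  also have "\<dots> \<noteq> \<infinity>" using integrableD(2)[OF second_moment] .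
  finally show ?thesis .
qed

lemma fb_sq_nn: "ennreal ((fb x)\<^sup>2) \<le> (\<integral>\<^sup>+ \<omega>. ennreal ((cv_pred A n K 0 \<omega> x)\<^sup>2) \<partial>\<Omega>)"
  if x: "x \<in> space Q"
proof (cases "(\<integral>\<^sup>+ \<omega>. ennreal ((cv_pred A n K 0 \<omega> x)\<^sup>2) \<partial>\<Omega>) = \<infinity>")
  case False
  interpret O: prob_space \<Omega> by (rule probOm)
  have mx: "(\<lambda>\<omega>. cv_pred A n K 0 \<omega> x) \<in> borel_measurable \<Omega>"
    using measurable_compose[OF measurable_Pair[OF measurable_ident_sets[OF refl] measurable_const[OF x]] f_meas[of 0]] Kpos by simp
  have i2: "integrable \<Omega> (\<lambda>\<omega>. (cv_pred A n K 0 \<omega> x)\<^sup>2)"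
    using False mx by (intro int_of_nn) auto
  have i1: "integrable \<Omega> (\<lambda>\<omega>. cv_pred A n K 0 \<omega> x)"
    by (rule O.square_integrable_imp_integrable[OF mx i2])
  have "0 \<le> O.variance (\<lambda>\<omega>. cv_pred A n K 0 \<omega> x)" by (rule O.variance_positive)
  then have "(fb x)\<^sup>2 \<le> (\<integral>\<omega>. (cv_pred A n K 0 \<omega> x)\<^sup>2 \<partial>\<Omega>)"
    using O.variance_eq[OF i1 i2] by (simp add: fbar_def)
  also have "ennreal \<dots> = (\<integral>\<^sup>+ \<omega>. ennreal ((cv_pred A n K 0 \<omega> x)\<^sup>2) \<partial>\<Omega>)"
    using i2 by (subst nn_integral_eq_integral) auto
  finally show ?thesis by (simp add: ennreal_leI)
qed simp

lemma fb_sq: "integrable Q (\<lambda>x. (fb x)\<^sup>2)"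
proof (rule int_of_nn)
  show "(\<lambda>x. (fb x)\<^sup>2) \<in> borel_measurable Q" using fb_meas by measurable
  have "(\<integral>\<^sup>+ x. ennreal ((fb x)\<^sup>2) \<partial>Q) \<le> (\<integral>\<^sup>+ x. \<integral>\<^sup>+ \<omega>. ennreal ((cv_pred A n K 0 \<omega> x)\<^sup>2) \<partial>\<Omega> \<partial>Q)"
    by (intro nn_integral_mono fb_sq_nn)
  then show "(\<integral>\<^sup>+ x. ennreal ((fb x)\<^sup>2) \<partial>Q) \<noteq> \<infinity>"
    using second_nn by (auto simp: top_unique)
qed auto

lemma fb_int: "integrable Q fb"
  by (rule finite_measure.square_integrable_imp_integrable[OF _ fb_meas fb_sq])
     (use probQ in \<open>simp add: prob_space_def\<close>)

lemma A_sq_meas: "(\<lambda>z. ennreal ((A (fst (fst z)) (snd (fst z)) (snd z))\<^sup>2)) \<in> borel_measurable ((D \<Otimes>\<^sub>M R) \<Otimes>\<^sub>M Q)"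
proof -
  have h0: "(\<lambda>z. A (fst (fst z)) (snd (fst z)) (snd z)) \<in> borel_measurable ((D \<Otimes>\<^sub>M R) \<Otimes>\<^sub>M Q)"
    using A_meas' by (simp add: split_beta')
  show ?thesis using measurable_compose[OF borel_measurable_power[OF h0, of 2] measurable_ennreal]
    by (simp add: comp_def)
qed

lemma Phi2_meas: "(\<lambda>dr. \<integral>\<^sup>+ x. ennreal ((A (fst dr) (snd dr) x)\<^sup>2) \<partial>Q) \<in> borel_measurable (D \<Otimes>\<^sub>M R)"
  using sigma_finite_measure.borel_measurable_nn_integral[OF sfQ,
      of "\<lambda>dr x. ennreal ((A (fst dr) (snd dr) x)\<^sup>2)" "D \<Otimes>\<^sub>M R"] A_sq_meas
  by (simp add: split_beta')

lemma fj_nn: "j < K \<Longrightarrow> (\<integral>\<^sup>+ \<omega>. \<integral>\<^sup>+ x. ennreal ((cv_pred A n K j \<omega> x)\<^sup>2) \<partial>Q \<partial>\<Omega>) \<noteq> \<infinity>"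
proof -
  assume j: "j < K"
  have "(\<integral>\<^sup>+ \<omega>. \<integral>\<^sup>+ x. ennreal ((cv_pred A n K j \<omega> x)\<^sup>2) \<partial>Q \<partial>\<Omega>)
      = integral\<^sup>N (D \<Otimes>\<^sub>M R) (\<lambda>dr. \<integral>\<^sup>+ x. ennreal ((A (fst dr) (snd dr) x)\<^sup>2) \<partial>Q)"
    using transfer[OF j Phi2_meas] by (simp add: cv_pred_eq)
  also have "\<dots> = (\<integral>\<^sup>+ \<omega>. \<integral>\<^sup>+ x. ennreal ((cv_pred A n K 0 \<omega> x)\<^sup>2) \<partial>Q \<partial>\<Omega>)"
    using transfer[OF Kpos Phi2_meas] by (simp add: cv_pred_eq)
  finally show ?thesis using second_nn' by simp
qed

definition Sbar :: "(nat \<Rightarrow> 'x \<times> 'y) \<times> (nat \<Rightarrow> 'x) \<times> (nat \<Rightarrow> 'r) \<Rightarrow> real" where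
  "Sbar \<omega> = (1 / real K) * (\<Sum>j<K. Ftilde P SX R A n N K j \<omega>)"

definition T' :: "(nat \<Rightarrow> 'x \<times> 'y) \<Rightarrow> (nat \<Rightarrow> 'r) \<Rightarrow> real" where
  "T' a r = (1 / real K) * (\<Sum>j<K. sqrt (real K * var_X Q (\<lambda>x. A (train_data n K j a) (r j) x - fb x)))"

lemma key:
  assumes a: "a \<in> space PI" and r: "r \<in> space RL" and e: "0 < e"
    and good: "\<And>j. j < K \<Longrightarrow> (\<integral>\<^sup>+ x. ennreal ((A (train_data n K j a) (r j) x)\<^sup>2) \<partial>Q) \<noteq> \<infinity>"
  shows "emeasure XJ {xt \<in> space XJ. e \<le> \<bar>Sbar (a, (xt, r))\<bar>} \<le> ennreal (T' a r / e)"
proof -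
  interpret Qp: prob_space Q by (rule probQ)
  define F where "F j x = A (train_data n K j a) (r j) x" for j x
  define g where "g j x = F j x - fb x" for j x
  define d where "d j x = g j x - integral\<^sup>L Q (g j)" for j x
  define c where "c x = (1 / real K) * (\<Sum>j<K. d j x)" for x
  have Fm[measurable]: "F j \<in> borel_measurable Q" if j: "j < K" for j
  proof -
    have "train_data n K j a \<in> space D" using train_meas a by (auto simp: measurable_def)
    moreover have "r j \<in> space R" using r j by (auto simp: space_PiM)
    ultimately have "(train_data n K j a, r j) \<in> space (D \<Otimes>\<^sub>M R)" by (simp add: space_pair_measure)
    from measurable_compose_Pair1[OF this A_meas'] have "A (train_data n K j a) (r j) \<in> borel_measurable Q" by simp
    moreover have "F j = A (train_data n K j a) (r j)" by (simp add: F_def fun_eq_iff)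
    ultimately show ?thesis by simp
  qed
  note fbm[measurable] = fb_meas
  have gm[measurable]: "j < K \<Longrightarrow> g j \<in> borel_measurable Q" for j unfolding g_def by measurable
  have dm[measurable]: "j < K \<Longrightarrow> d j \<in> borel_measurable Q" for j unfolding d_def by measurable
  have cm[measurable]: "c \<in> borel_measurable Q" unfolding c_def by measurable
  have F2: "integrable Q (\<lambda>x. (F j x)\<^sup>2)" if j: "j < K" for j
  proof (rule int_of_nn)
    show "(\<lambda>x. (F j x)\<^sup>2) \<in> borel_measurable Q" using Fm[OF j] by measurable
    show "(\<integral>\<^sup>+ x. ennreal ((F j x)\<^sup>2) \<partial>Q) \<noteq> \<infinity>" using good[OF j] by (simp add: F_def)
  qed auto
  have Fi: "j < K \<Longrightarrow> integrable Q (F j)" for j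
    by (rule Qp.square_integrable_imp_integrable[OF Fm F2])
  have g2: "j < K \<Longrightarrow> integrable Q (\<lambda>x. (g j x)\<^sup>2)" for j
    unfolding g_def by (rule sqint_diff) (auto intro: F2 fb_sq)
  have gi: "j < K \<Longrightarrow> integrable Q (g j)" for j
    unfolding g_def using Fi fb_int by auto
  have d2: "j < K \<Longrightarrow> integrable Q (\<lambda>x. (d j x)\<^sup>2)" for j
    unfolding d_def by (rule sqint_diff) (auto intro: g2)
  have var: "j < K \<Longrightarrow> var_X Q (g j) = (\<integral>x. (d j x)\<^sup>2 \<partial>Q)" for j
    by (simp add: var_X_def d_def)
  have c2b: "(c x)\<^sup>2 \<le> (1 / real K) * (\<Sum>j<K. (d j x)\<^sup>2)" for x
    unfolding c_def by (rule sq_avg_le)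
  have sumd2: "integrable Q (\<lambda>x. (1 / real K) * (\<Sum>j<K. (d j x)\<^sup>2))"
    using d2 by (intro integrable_mult_right Bochner_Integration.integrable_sum) auto
  have c2: "integrable Q (\<lambda>x. (c x)\<^sup>2)"
  proof (rule Bochner_Integration.integrable_bound[OF sumd2])
    show "(\<lambda>x. (c x)\<^sup>2) \<in> borel_measurable Q" by measurable
    show "AE x in Q. norm ((c x)\<^sup>2) \<le> norm ((1 / real K) * (\<Sum>j<K. (d j x)\<^sup>2))"
    proof (intro AE_I2)
      fix x
      have "0 \<le> (\<Sum>j<K. (d j x)\<^sup>2)" by (intro sum_nonneg) auto
      then have "norm ((1 / real K) * (\<Sum>j<K. (d j x)\<^sup>2)) = (1 / real K) * (\<Sum>j<K. (d j x)\<^sup>2)"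
        by (simp only: real_norm_def) (rule abs_of_nonneg, simp)
      moreover have "norm ((c x)\<^sup>2) = (c x)\<^sup>2" by simp
      ultimately show "norm ((c x)\<^sup>2) \<le> norm ((1 / real K) * (\<Sum>j<K. (d j x)\<^sup>2))"
        using c2b[of x] by linarith
    qed
  qed
  define U where "U = (1 / real K) * (\<Sum>j<K. var_X Q (g j))"
  have vpos: "j < K \<Longrightarrow> 0 \<le> var_X Q (g j)" for j
    by (simp add: var_X_def)
  have c2U: "(\<integral>x. (c x)\<^sup>2 \<partial>Q) \<le> U"
  proof -
    have "(\<integral>x. (c x)\<^sup>2 \<partial>Q) \<le> (\<integral>x. (1 / real K) * (\<Sum>j<K. (d j x)\<^sup>2) \<partial>Q)"
      by (rule integral_mono[OF c2 sumd2]) (rule c2b)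
    also have "\<dots> = (1 / real K) * (\<Sum>j<K. (\<integral>x. (d j x)\<^sup>2 \<partial>Q))"
      using d2 by (simp add: Bochner_Integration.integral_sum)
    also have "\<dots> = U" unfolding U_def using var by simp
    finally show ?thesis .
  qed
  have di: "integrable Q (d j)" if j: "j < K" for j
    using Qp.square_integrable_imp_integrable[OF dm[OF j] d2[OF j]] .
  have d0: "integral\<^sup>L Q (d j) = 0" if j: "j < K" for j
  proof -
    have "integral\<^sup>L Q (d j) = integral\<^sup>L Q (g j) - integral\<^sup>L Q (\<lambda>_. integral\<^sup>L Q (g j))"
      unfolding d_def using gi[OF j] by (rule Bochner_Integration.integral_diff) simp
    then show ?thesis using Qp.prob_space by simp
  qed
  have c0: "integral\<^sup>L Q c = 0"
  proof -
    have "integral\<^sup>L Q c = (1 / real K) * integral\<^sup>L Q (\<lambda>x. \<Sum>j<K. d j x)"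
      unfolding c_def by (rule integral_mult_right_zero)
    also have "integral\<^sup>L Q (\<lambda>x. \<Sum>j<K. d j x) = (\<Sum>j<K. integral\<^sup>L Q (d j))"
      by (rule Bochner_Integration.integral_sum) (use di in auto)
    also have "\<dots> = 0" using d0 by simp
    finally show ?thesis by simp
  qed
  have Sid: "Sbar (a, (xt, r)) = (1 / sqrt (real N)) * (\<Sum>i<N. c (xt i))" for xt
  proof -
    have Ft: "Ftilde P SX R A n N K j (a, (xt, r)) = (1 / sqrt (real N)) * (\<Sum>i<N. d j (xt i))" if j: "j < K" for j
    proof -
      have eF: "integral\<^sup>L Q (F j) = integral\<^sup>L Q (g j) + integral\<^sup>L Q fb"
        unfolding g_def using Fi[OF j] fb_int by simp
      moreover have cF: "cv_pred A n K j (a, (xt, r)) = F j" by (simp add: fun_eq_iff cv_pred_def F_def)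
      ultimately show ?thesis
        unfolding Ftilde_def Let_def cF
        by (simp add: d_def g_def eF algebra_simps)
    qed
    have "Sbar (a, (xt, r)) = (1 / real K) * (\<Sum>j<K. (1 / sqrt (real N)) * (\<Sum>i<N. d j (xt i)))"
      unfolding Sbar_def using Ft by simp
    also have "\<dots> = (1 / sqrt (real N)) * (\<Sum>i<N. c (xt i))"
      unfolding c_def
      apply (simp add: sum_distrib_left sum.swap[of _ "{..<K}"] mult.left_commute)
      apply (intro sum.cong refl)
      apply (simp add: mult.commute)
      done
    finally show ?thesis .
  qed
  have "emeasure XJ {xt \<in> space XJ. e \<le> \<bar>Sbar (a, (xt, r))\<bar>}
      = emeasure XJ {xt \<in> space XJ. e \<le> \<bar>(1 / sqrt (real N)) * (\<Sum>i<N. c (xt i))\<bar>}"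
    by (simp add: Sid)
  also have "\<dots> \<le> ennreal (min 1 ((\<integral>x. (c x)\<^sup>2 \<partial>Q) / e\<^sup>2))"
    by (rule cheb[OF probQ cm c2 c0 e Npos])
  also have "\<dots> \<le> ennreal (min 1 (U / e\<^sup>2))"
    using c2U e by (intro ennreal_leI min.mono divide_right_mono) auto
  also have "\<dots> \<le> ennreal (sqrt U / e)"
  proof (intro ennreal_leI min_le_sqrt e)
    have "0 \<le> (\<Sum>j<K. var_X Q (g j))" by (intro sum_nonneg vpos) simp
    then show "0 \<le> U" unfolding U_def by simp
  qed
  also have "\<dots> \<le> ennreal (T' a r / e)"
  proof (intro ennreal_leI divide_right_mono)
    show "sqrt U \<le> T' a r"
      unfolding U_def T'_def g_def F_def
      by (rule sqrt_avg_le[OF Kpos]) (simp add: var_X_def)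
  qed (use e in simp)
  finally show ?thesis .
qed

lemma var_meas:
  assumes hm: "(\<lambda>z. h (fst z) (snd z)) \<in> borel_measurable (M \<Otimes>\<^sub>M Q)"
  shows "(\<lambda>d. var_X Q (h d)) \<in> borel_measurable M"
proof -
  have I1: "(\<lambda>d. \<integral>x. h d x \<partial>Q) \<in> borel_measurable M"
    using sigma_finite_measure.borel_measurable_lebesgue_integral[OF sfQ, of h M] hm
    by (simp add: split_beta')
  have "(\<lambda>z. (h (fst z) (snd z) - (\<integral>x. h (fst z) x \<partial>Q))\<^sup>2) \<in> borel_measurable (M \<Otimes>\<^sub>M Q)"
    by (intro borel_measurable_power borel_measurable_diff hm measurable_compose[OF measurable_fst I1])
  then show ?thesis
    using sigma_finite_measure.borel_measurable_lebesgue_integral[OF sfQ,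
        of "\<lambda>d x. (h d x - (\<integral>x. h d x \<partial>Q))\<^sup>2" M]
    by (simp add: split_beta' var_X_def)
qed

lemma PhiW_meas: "(\<lambda>dr. ennreal (sqrt (real K * var_X Q (\<lambda>x. A (fst dr) (snd dr) x - fb x)))) \<in> borel_measurable (D \<Otimes>\<^sub>M R)"
proof -
  have h0: "(\<lambda>z. A (fst (fst z)) (snd (fst z)) (snd z)) \<in> borel_measurable ((D \<Otimes>\<^sub>M R) \<Otimes>\<^sub>M Q)"
    using A_meas' by (simp add: split_beta')
  have "(\<lambda>z. A (fst (fst z)) (snd (fst z)) (snd z) - fb (snd z)) \<in> borel_measurable ((D \<Otimes>\<^sub>M R) \<Otimes>\<^sub>M Q)"
    by (intro borel_measurable_diff h0 measurable_compose[OF measurable_snd fb_meas])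
  from var_meas[of "\<lambda>dr x. A (fst dr) (snd dr) x - fb x", OF this]
  have "(\<lambda>dr. var_X Q (\<lambda>x. A (fst dr) (snd dr) x - fb x)) \<in> borel_measurable (D \<Otimes>\<^sub>M R)" by simp
  then show ?thesis by measurable
qed

lemma fj_meas_pt: "j < K \<Longrightarrow> (\<lambda>\<omega>. cv_pred A n K j \<omega> (g \<omega>)) \<in> borel_measurable \<Omega>"
  if g: "g \<in> measurable \<Omega> Q" for g
proof -
  assume j: "j < K"
  have "(\<lambda>\<omega>. (\<omega>, g \<omega>)) \<in> measurable \<Omega> (\<Omega> \<Otimes>\<^sub>M Q)"
    using g by (intro measurable_Pair) auto
  from measurable_compose[OF this f_meas[OF j]] show ?thesis by simp
qed

lemma Ftilde_meas: "j < K \<Longrightarrow> Ftilde P SX R A n N K j \<in> borel_measurable \<Omega>"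
proof -
  assume j: "j < K"
  have xi: "(\<lambda>\<omega>. fst (snd \<omega>) i) \<in> measurable \<Omega> Q" if i: "i < N" for i
    unfolding Omega_def
    by (intro measurable_compose[OF measurable_snd] measurable_compose[OF measurable_fst]
        measurable_component_singleton) (use i in simp)
  have h1: "(\<lambda>\<omega>. cv_pred A n K j \<omega> (fst (snd \<omega>) i)) \<in> borel_measurable \<Omega>" if i: "i < N" for i
    by (rule fj_meas_pt[OF xi[OF i] j])
  have h2: "(\<lambda>\<omega>. \<integral>x. cv_pred A n K j \<omega> x \<partial>Q) \<in> borel_measurable \<Omega>"
    using sigma_finite_measure.borel_measurable_lebesgue_integral[OF sfQ, of "\<lambda>\<omega> x. cv_pred A n K j \<omega> x" \<Omega>] f_meas[OF j]
    by simp
  have h3: "(\<lambda>\<omega>. fb (fst (snd \<omega>) i)) \<in> borel_measurable \<Omega>" if i: "i < N" for i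
    by (rule measurable_compose[OF xi[OF i] fb_meas])
  show ?thesis
    unfolding Ftilde_def Let_def
    by (intro borel_measurable_times borel_measurable_const borel_measurable_sum borel_measurable_diff
        h1 h2 h3) auto
qed

lemma Sbar_meas: "Sbar \<in> borel_measurable \<Omega>"
  unfolding Sbar_def[abs_def]
  by (intro borel_measurable_times borel_measurable_const borel_measurable_sum Ftilde_meas) auto

lemma good_AE: "AE a in PI. AE r in RL. \<forall>j\<in>{..<K}. (\<integral>\<^sup>+ x. ennreal ((A (train_data n K j a) (r j) x)\<^sup>2) \<partial>Q) \<noteq> \<infinity>"
proof -
  interpret XJ: prob_space XJ by (rule probXJ)
  interpret RL: prob_space RL by (rule probRL)
  interpret PI: prob_space PI by (rule probPI)
  interpret XR: pair_prob_space XJ RL ..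
  interpret XRs: prob_space "XJ \<Otimes>\<^sub>M RL" by (rule prob_space_pair) unfold_locales
  interpret O: pair_prob_space PI "XJ \<Otimes>\<^sub>M RL" ..
  let ?G = "\<lambda>j \<omega>. \<integral>\<^sup>+ x. ennreal ((A (train_data n K j (fst \<omega>)) (snd (snd \<omega>) j) x)\<^sup>2) \<partial>Q"
  have "AE \<omega> in \<Omega>. ?G j \<omega> \<noteq> \<infinity>" if j: "j \<in> {..<K}" for j
  proof (rule nn_integral_noteq_infinite)
    show "?G j \<in> borel_measurable \<Omega>"
      using measurable_compose[OF map_meas Phi2_meas] j by simp
    show "integral\<^sup>N \<Omega> (?G j) \<noteq> \<infinity>" using fj_nn[of j] j by (simp add: cv_pred_eq)
  qed
  then have "AE \<omega> in \<Omega>. \<forall>j\<in>{..<K}. ?G j \<omega> \<noteq> \<infinity>"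
    by (intro AE_finite_allI) auto
  then have "AE a in PI. AE y in XJ \<Otimes>\<^sub>M RL. \<forall>j\<in>{..<K}. ?G j (a, y) \<noteq> \<infinity>"
    unfolding Omega_def by (rule O.AE_pair)
  then show ?thesis
  proof (rule eventually_mono)
    fix a assume "AE y in XJ \<Otimes>\<^sub>M RL. \<forall>j\<in>{..<K}. ?G j (a, y) \<noteq> \<infinity>"
    then have "AE x in XJ. AE r in RL. \<forall>j\<in>{..<K}. ?G j (a, (x, r)) \<noteq> \<infinity>"
      by (rule XR.AE_pair)
    then show "AE r in RL. \<forall>j\<in>{..<K}. (\<integral>\<^sup>+ x. ennreal ((A (train_data n K j a) (r j) x)\<^sup>2) \<partial>Q) \<noteq> \<infinity>"
      by simp
  qed
qed

abbreviation "PhiW \<equiv> (\<lambda>dr. ennreal (sqrt (real K * var_X Q (\<lambda>x. A (fst dr) (snd dr) x - fb x))))"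

lemma main:
  assumes e: "0 < e"
  shows "emeasure \<Omega> {\<omega> \<in> space \<Omega>. e \<le> \<bar>Sbar \<omega>\<bar>}
     \<le> ennreal (1 / e) * (\<integral>\<^sup>+ \<omega>. ennreal (sqrt (real K * var_X Q (\<lambda>x. cv_pred A n K 0 \<omega> x - fb x))) \<partial>\<Omega>)"
proof -
  interpret XJ: prob_space XJ by (rule probXJ)
  interpret RL: prob_space RL by (rule probRL)
  interpret PI: prob_space PI by (rule probPI)
  define B where "B = {\<omega> \<in> space \<Omega>. e \<le> \<bar>Sbar \<omega>\<bar>}"
  have Bs: "B \<in> sets \<Omega>" unfolding B_def using Sbar_meas by measurable
  define cst where "cst = ennreal (1 / (real K * e))"
  define H :: "(nat \<Rightarrow> 'x \<times> 'y) \<times> (nat \<Rightarrow> 'x) \<times> (nat \<Rightarrow> 'r) \<Rightarrow> ennreal"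
    where "H \<omega> = (\<Sum>j<K. cst * PhiW (train_data n K j (fst \<omega>), snd (snd \<omega>) j))" for \<omega>
  have Hm: "H \<in> borel_measurable \<Omega>" unfolding H_def
    by (intro borel_measurable_sum borel_measurable_times_ennreal borel_measurable_const
          measurable_compose[OF map_meas PhiW_meas]) auto
  have TH: "ennreal (T' a r / e) = H (a, (x, r))" for a x r
  proof -
    define v where "v j = sqrt (real K * var_X Q (\<lambda>x. A (train_data n K j a) (r j) x - fb x))" for j
    have v0: "0 \<le> v j" for j by (simp add: v_def var_X_def)
    have e1: "T' a r / e = (\<Sum>j<K. (1 / (real K * e)) * v j)"
      unfolding T'_def v_def by (simp add: sum_distrib_left sum_divide_distrib)
    have e2: "ennreal (\<Sum>j<K. (1 / (real K * e)) * v j) = (\<Sum>j<K. ennreal ((1 / (real K * e)) * v j))"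
      using e v0 by (intro sum_ennreal[symmetric]) auto
    have e3: "(\<Sum>j<K. ennreal ((1 / (real K * e)) * v j)) = H (a, (x, r))"
      unfolding H_def cst_def
    proof (intro sum.cong refl)
      fix j
      have "ennreal ((1 / (real K * e)) * v j) = ennreal (1 / (real K * e)) * ennreal (v j)"
        by (rule ennreal_mult) (use e v0 in auto)
      then show "ennreal ((1 / (real K * e)) * v j) = ennreal (1 / (real K * e)) * PhiW (train_data n K j (fst (a, x, r)), snd (snd (a, x, r)) j)"
        by (simp add: v_def)
    qed
    show ?thesis using e1 e2 e3 by simp
  qed
  have "emeasure \<Omega> B = (\<integral>\<^sup>+ \<omega>. indicator B \<omega> \<partial>\<Omega>)" using Bs by simp
  also have "\<dots> = (\<integral>\<^sup>+ a. \<integral>\<^sup>+ r. \<integral>\<^sup>+ x. indicator B (a, (x, r)) \<partial>XJ \<partial>RL \<partial>PI)"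
    using Bs by (intro nn_Omega) simp
  also have "\<dots> \<le> (\<integral>\<^sup>+ a. \<integral>\<^sup>+ r. ennreal (T' a r / e) \<partial>RL \<partial>PI)"
  proof (rule nn_integral_mono_AE)
    show "AE a in PI. (\<integral>\<^sup>+ r. \<integral>\<^sup>+ x. indicator B (a, (x, r)) \<partial>XJ \<partial>RL) \<le> (\<integral>\<^sup>+ r. ennreal (T' a r / e) \<partial>RL)"
      using good_AE
    proof (rule AE_mp, intro AE_I2 impI)
      fix a assume a: "a \<in> space PI"
        and ga: "AE r in RL. \<forall>j\<in>{..<K}. (\<integral>\<^sup>+ x. ennreal ((A (train_data n K j a) (r j) x)\<^sup>2) \<partial>Q) \<noteq> \<infinity>"
      show "(\<integral>\<^sup>+ r. \<integral>\<^sup>+ x. indicator B (a, (x, r)) \<partial>XJ \<partial>RL) \<le> (\<integral>\<^sup>+ r. ennreal (T' a r / e) \<partial>RL)"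
      proof (rule nn_integral_mono_AE)
        show "AE r in RL. (\<integral>\<^sup>+ x. indicator B (a, (x, r)) \<partial>XJ) \<le> ennreal (T' a r / e)"
          using ga
        proof (rule AE_mp, intro AE_I2 impI)
          fix r assume r: "r \<in> space RL"
            and gr: "\<forall>j\<in>{..<K}. (\<integral>\<^sup>+ x. ennreal ((A (train_data n K j a) (r j) x)\<^sup>2) \<partial>Q) \<noteq> \<infinity>"
          have sec: "(\<lambda>x. (a, (x, r))) \<in> measurable XJ \<Omega>"
            unfolding Omega_def using a r by (intro measurable_Pair) auto
          have Cs: "{xt \<in> space XJ. e \<le> \<bar>Sbar (a, (xt, r))\<bar>} \<in> sets XJ"
            using measurable_compose[OF sec Sbar_meas] by measurable
          have "(\<integral>\<^sup>+ x. indicator B (a, (x, r)) \<partial>XJ)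
              = (\<integral>\<^sup>+ x. indicator {xt \<in> space XJ. e \<le> \<bar>Sbar (a, (xt, r))\<bar>} x \<partial>XJ)"
          proof (rule nn_integral_cong)
            fix x assume x: "x \<in> space XJ"
            then have "(a, (x, r)) \<in> space \<Omega>" using a r by (simp add: Omega_def space_pair_measure)
            then show "indicator B (a, (x, r)) = (indicator {xt \<in> space XJ. e \<le> \<bar>Sbar (a, (xt, r))\<bar>} x :: ennreal)"
              using x by (simp add: B_def indicator_def)
          qed
          also have "\<dots> = emeasure XJ {xt \<in> space XJ. e \<le> \<bar>Sbar (a, (xt, r))\<bar>}"
            using Cs by simp
          also have "\<dots> \<le> ennreal (T' a r / e)"
            by (rule key[OF a r e]) (use gr in auto)
          finally show "(\<integral>\<^sup>+ x. indicator B (a, (x, r)) \<partial>XJ) \<le> ennreal (T' a r / e)" .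
        qed
      qed
    qed
  qed
  also have "\<dots> = integral\<^sup>N \<Omega> H"
    by (subst nn_Omega[OF Hm]) (simp add: TH[symmetric] XJ.emeasure_space_1)
  also have "\<dots> = ennreal (1 / e) * (\<integral>\<^sup>+ \<omega>. ennreal (sqrt (real K * var_X Q (\<lambda>x. cv_pred A n K 0 \<omega> x - fb x))) \<partial>\<Omega>)"
  proof -
    have "integral\<^sup>N \<Omega> H = (\<Sum>j<K. cst * (\<integral>\<^sup>+ \<omega>. PhiW (train_data n K j (fst \<omega>), snd (snd \<omega>) j) \<partial>\<Omega>))"
      unfolding H_def
    proof (subst nn_integral_sum)
      fix j assume j: "j \<in> {..<K}"
      have PWm: "(\<lambda>\<omega>. PhiW (train_data n K j (fst \<omega>), snd (snd \<omega>) j)) \<in> borel_measurable \<Omega>"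
        using measurable_compose[OF map_meas PhiW_meas] j by simp
      then show "(\<lambda>\<omega>. cst * PhiW (train_data n K j (fst \<omega>), snd (snd \<omega>) j)) \<in> borel_measurable \<Omega>"
        by (intro borel_measurable_times_ennreal borel_measurable_const)
    next
      show "(\<Sum>j<K. \<integral>\<^sup>+ \<omega>. cst * PhiW (train_data n K j (fst \<omega>), snd (snd \<omega>) j) \<partial>\<Omega>)
          = (\<Sum>j<K. cst * (\<integral>\<^sup>+ \<omega>. PhiW (train_data n K j (fst \<omega>), snd (snd \<omega>) j) \<partial>\<Omega>))"
      proof (intro sum.cong refl)
        fix j assume j: "j \<in> {..<K}"
        have PWm: "(\<lambda>\<omega>. PhiW (train_data n K j (fst \<omega>), snd (snd \<omega>) j)) \<in> borel_measurable \<Omega>"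
          using measurable_compose[OF map_meas PhiW_meas] j by simp
        show "(\<integral>\<^sup>+ \<omega>. cst * PhiW (train_data n K j (fst \<omega>), snd (snd \<omega>) j) \<partial>\<Omega>)
          = cst * (\<integral>\<^sup>+ \<omega>. PhiW (train_data n K j (fst \<omega>), snd (snd \<omega>) j) \<partial>\<Omega>)"
          by (rule nn_integral_cmult[OF PWm])
      qed
    qed
    also have "\<dots> = (\<Sum>j<K. cst * integral\<^sup>N (D \<Otimes>\<^sub>M R) PhiW)"
      by (intro sum.cong refl arg_cong2[where f="(*)"] transfer PhiW_meas) auto
    also have "\<dots> = (of_nat K * cst) * integral\<^sup>N (D \<Otimes>\<^sub>M R) PhiW"
      by (simp add: mult.assoc)
    finally have s1: "integral\<^sup>N \<Omega> H = (of_nat K * cst) * integral\<^sup>N (D \<Otimes>\<^sub>M R) PhiW" .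
    have s2: "of_nat K * cst = ennreal (1 / e)"
    proof -
      have "of_nat K * cst = ennreal (real K) * ennreal (1 / (real K * e))"
        unfolding cst_def by (simp add: ennreal_of_nat_eq_real_of_nat)
      also have "\<dots> = ennreal (real K * (1 / (real K * e)))"
        using e by (simp add: ennreal_mult[symmetric])
      also have "real K * (1 / (real K * e)) = 1 / e" using Kpos by simp
      finally show ?thesis .
    qed
    have s3: "integral\<^sup>N (D \<Otimes>\<^sub>M R) PhiW = (\<integral>\<^sup>+ \<omega>. ennreal (sqrt (real K * var_X Q (\<lambda>x. cv_pred A n K 0 \<omega> x - fb x))) \<partial>\<Omega>)"
      using transfer[OF Kpos PhiW_meas] by (simp add: cv_pred_eq)
    show ?thesis unfolding s1 s2 s3 ..
  qed
  finally show ?thesis unfolding B_def .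
qed

lemma final:
  assumes e: "0 < e"
    and Wi: "integrable \<Omega> (\<lambda>\<omega>. sqrt (real K * var_X Q (\<lambda>x. cv_pred A n K 0 \<omega> x - fb x)))"
  shows "measure \<Omega> {\<omega> \<in> space \<Omega>. e \<le> \<bar>(1 / real K) * (\<Sum>j<K. Ftilde P SX R A n N K j \<omega>)\<bar>}
     \<le> (\<integral>\<omega>. \<bar>sqrt (real K * var_X Q (\<lambda>x. cv_pred A n K 0 \<omega> x - fb x))\<bar> \<partial>\<Omega>) / e"
proof -
  interpret O: prob_space \<Omega> by (rule probOm)
  let ?W = "\<lambda>\<omega>. sqrt (real K * var_X Q (\<lambda>x. cv_pred A n K 0 \<omega> x - fb x))"
  have W0: "0 \<le> ?W \<omega>" for \<omega> by (simp add: var_X_def)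
  have f1: "ennreal (O.prob {\<omega> \<in> space \<Omega>. e \<le> \<bar>Sbar \<omega>\<bar>}) = emeasure \<Omega> {\<omega> \<in> space \<Omega>. e \<le> \<bar>Sbar \<omega>\<bar>}"
    by (simp add: O.emeasure_eq_measure)
  have f2: "emeasure \<Omega> {\<omega> \<in> space \<Omega>. e \<le> \<bar>Sbar \<omega>\<bar>} \<le> ennreal (1 / e) * (\<integral>\<^sup>+ \<omega>. ennreal (?W \<omega>) \<partial>\<Omega>)"
    by (rule main[OF e])
  have f3: "(\<integral>\<^sup>+ \<omega>. ennreal (?W \<omega>) \<partial>\<Omega>) = ennreal (integral\<^sup>L \<Omega> ?W)"
    by (rule nn_integral_eq_integral[OF Wi]) (intro AE_I2 W0)
  have I0: "0 \<le> integral\<^sup>L \<Omega> ?W" by (rule Bochner_Integration.integral_nonneg) (rule W0)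
  have f4: "ennreal (1 / e) * ennreal (integral\<^sup>L \<Omega> ?W) = ennreal (integral\<^sup>L \<Omega> ?W / e)"
    using e I0 by (simp add: ennreal_mult[symmetric])
  have "ennreal (O.prob {\<omega> \<in> space \<Omega>. e \<le> \<bar>Sbar \<omega>\<bar>}) \<le> ennreal (integral\<^sup>L \<Omega> ?W / e)"
    using f1 f2 unfolding f3 f4 by simp
  then have "O.prob {\<omega> \<in> space \<Omega>. e \<le> \<bar>Sbar \<omega>\<bar>} \<le> integral\<^sup>L \<Omega> ?W / e"
    using e I0 by (subst (asm) ennreal_le_iff) auto
  then show ?thesis using W0 by (simp add: Sbar_def)
qed

end

theorem lemma1:
  fixes P :: "('x \<times> 'y) measure" and SX :: "'x measure" and SY :: "'y measure"
    and R :: "nat \<Rightarrow> 'r measure"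
    and A :: "nat \<Rightarrow> (nat \<Rightarrow> 'x \<times> 'y) \<Rightarrow> 'r \<Rightarrow> 'x \<Rightarrow> real"
    and K N :: "nat \<Rightarrow> nat"
  assumes P: "prob_space P" and sets_P: "sets P = sets (SX \<Otimes>\<^sub>M SY)"
    and R: "\<And>n. prob_space (R n)"
    and K: "\<And>n. 0 < K n" "\<And>n. K n dvd n"
    and N: "\<And>n. 0 < N n"
    and A_meas: "\<And>n. (\<lambda>(dr, x). A n (fst dr) (snd dr) x)
        \<in> borel_measurable ((PiM {0..<n - n div K n} (\<lambda>_. P) \<Otimes>\<^sub>M R n) \<Otimes>\<^sub>M SX)"
    and second_moment: "\<And>n. integrable (sample_space P SX (R n) n (N n) (K n) \<Otimes>\<^sub>M feat_dist P SX)
        (\<lambda>(\<omega>, x). (cv_pred (A n) n (K n) 0 \<omega> x)\<^sup>2)"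
    and stable: "L1_to_zero (\<lambda>n. sample_space P SX (R n) n (N n) (K n))
        (\<lambda>n \<omega>. sqrt (real (K n) * var_X (feat_dist P SX)
           (\<lambda>x. cv_pred (A n) n (K n) 0 \<omega> x
                - fbar (sample_space P SX (R n) n (N n) (K n)) (A n) n (K n) x)))"
  shows "prob_to_zero (\<lambda>n. sample_space P SX (R n) n (N n) (K n))
        (\<lambda>n \<omega>. (1 / real (K n)) * (\<Sum>j<K n. Ftilde P SX (R n) (A n) n (N n) (K n) j \<omega>))"
proof -
  have loc: "cvset P SX SY (R n) (A n) n (N n) (K n)" for n
    unfolding cvset_def using P sets_P R K(1) N A_meas second_moment by blast
  let ?W = "\<lambda>n \<omega>. sqrt (real (K n) * var_X (feat_dist P SX)
           (\<lambda>x. cv_pred (A n) n (K n) 0 \<omega> x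
                - fbar (sample_space P SX (R n) n (N n) (K n)) (A n) n (K n) x))"
  let ?M = "\<lambda>n. sample_space P SX (R n) n (N n) (K n)"
  let ?S = "\<lambda>n \<omega>. (1 / real (K n)) * (\<Sum>j<K n. Ftilde P SX (R n) (A n) n (N n) (K n) j \<omega>)"
  have Wi: "integrable (?M n) (?W n)" for n using stable by (simp add: L1_to_zero_def)
  have Wl: "(\<lambda>n. \<integral>\<omega>. \<bar>?W n \<omega>\<bar> \<partial>?M n) \<longlonglongrightarrow> 0" using stable by (simp add: L1_to_zero_def)
  have meas: "?S n \<in> borel_measurable (?M n)" for n
  proof -
    interpret cvset P SX SY "R n" "A n" n "N n" "K n" by (rule loc)
    show ?thesis using Sbar_meas unfolding Sbar_def[abs_def] .
  qed
  have bnd: "measure (?M n) {\<omega> \<in> space (?M n). e \<le> \<bar>?S n \<omega>\<bar>} \<le> (\<integral>\<omega>. \<bar>?W n \<omega>\<bar> \<partial>?M n) / e"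
    if e: "0 < e" for e n
  proof -
    interpret cvset P SX SY "R n" "A n" n "N n" "K n" by (rule loc)
    have wi: "integrable (?M n) (?W n)" by (rule Wi)
    note fi = final[OF e wi]
    show ?thesis by (rule fi)
  qed
  show ?thesis unfolding prob_to_zero_def
  proof (intro conjI allI impI)
    fix n show "?S n \<in> borel_measurable (?M n)" by (rule meas)
  next
    fix e :: real assume e: "0 < e"
    show "(\<lambda>n. measure (?M n) {\<omega> \<in> space (?M n). e \<le> \<bar>?S n \<omega>\<bar>}) \<longlonglongrightarrow> 0"
    proof (rule tendsto_sandwich[of "\<lambda>_. 0" _ _ "\<lambda>n. (\<integral>\<omega>. \<bar>?W n \<omega>\<bar> \<partial>?M n) / e"])
      show "\<forall>\<^sub>F n in sequentially. 0 \<le> measure (?M n) {\<omega> \<in> space (?M n). e \<le> \<bar>?S n \<omega>\<bar>}" by simp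
      show "\<forall>\<^sub>F n in sequentially. measure (?M n) {\<omega> \<in> space (?M n). e \<le> \<bar>?S n \<omega>\<bar>} \<le> (\<integral>\<omega>. \<bar>?W n \<omega>\<bar> \<partial>?M n) / e"
        using bnd[OF e] by simp
      show "(\<lambda>n. (\<integral>\<omega>. \<bar>?W n \<omega>\<bar> \<partial>?M n) / e) \<longlonglongrightarrow> 0"
        using tendsto_divide[OF Wl tendsto_const[of e]] e by simp
    qed simp
  qed
qed

end
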